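(* Let $\phi:\mathbb{R}^2_{\ge}\times X\times\Omega\to X$ be a nonautonomous random dynamical system (NRDS) on a probability space $(\Omega,\mathcal{F},\mathbb{P})$ whose state space $X$ is finite. For $t\in\mathbb{R}$ and $\omega\in\Omega$ define \[ A(t,\omega):=\bigcap_{t_0\le t}\phi(t,t_0,X,\omega). \] Then $A(t,\omega)$ is nonempty for all $\omega\in\Omega$, $t\in\mathbb{R}$, and $A$ defines a global random pullback attractor. Moreover, for all $\omega\in\Omega$ and $t\in\mathbb{R}$ there exists $T_0(t,\omega)<t$ such that $\phi(t,t_0,X,\omega)=A(t,\omega)$ for all $t_0\le T_0(t,\omega)$. If, in addition, for each $p\in(0,1)$ there is $T_p>0$ such that \[ \mathbb{P}(\{\omega\in\Omega\mid t-T_0(t,\omega)\le T_p\})\ge p \quad\text{for all } t\in\mathbb{R}, \] then $A$ also defines a global random forward attractor, and for almost every $\omega\in\Omega$ and all $t_0\in\mathbb{R}$ there exists $T(t_0,\omega)>t_0$ such that $\phi(t,t_0,X,\omega)=A(t,\omega)$ for all $t\ge T(t_0,\omega)$.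
   Context: Let $\mathbb{R}^2_{\ge}:=\{(t,s)\in\mathbb{R}^2\mid t\ge s\}$, $(X,d_X)$ a Polish metric space and $(\Omega,\mathcal{F},\mathbb{P})$ a probability space. A map $\phi:\mathbb{R}^2_\ge\times X\times\Omega\to X$ is an NRDS if (i) it is $(\mathcal{B}(\mathbb{R}^2_\ge)\times\mathcal{B}(X)\times\mathcal{F},\mathcal{B}(X))$-measurable; (ii) $\phi(t,t,\cdot,\omega)$ is the identity on $X$ for all $t,\omega$; (iii) (cocycle property) $\phi(t,t_0,x,\omega)=\phi(t,s,\phi(s,t_0,x,\omega),\omega)$ for all $t\ge s\ge t_0$, $x\in X$, $\omega\in\Omega$; (iv) $x\mapsto\phi(t,s,x,\omega)$ is continuous. For $B\subset X$ write $\phi(t,t_0,B,\omega)=\{\phi(t,t_0,x,\omega)\mid x\in B\}$. A finite state space carries the discrete topology and the metric $d(x_1,x_2)=1$ if $x_1\ne x_2$, $0$ otherwise; $\mathrm{dist}(A_1,A_2):=\sup_{a_1\in A_1}\inf_{a_2\in A_2}d(a_1,a_2)$. A nonautonomous random set is a family $(C(t))_{t\in\mathbb{R}}$ of measurable subsets of $X\times\Omega$ (product $\sigma$-algebra), with $\omega$-sections $C(t,\omega)=\{x\mid (x,\omega)\in C(t)\}$; it is compact if every $C(t,\omega)$ is compact. A compact nonautonomous random set $A$ that is strictly $\phi$-invariant, i.e. $\phi(t,t_0,A(t_0,\omega),\omega)=A(t,\omega)$ for all $(t,t_0)\in\mathbb{R}^2_\ge$ a.s., is a global random pullback attractor if for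 each $t\in\mathbb{R}$, $\lim_{t_0\to-\infty}\mathrm{dist}(\phi(t,t_0,X,\omega),A(t,\omega))=0$ a.s.; it is a global random forward attractor if for each $t_0\in\mathbb{R}$, $\lim_{t\to\infty}\mathrm{dist}(\phi(t,t_0,X,\omega),A(t,\omega))=0$ a.s. *)

theory Defs
  imports "HOL-Probability.Probability"
begin

text \<open>Finite state space X is modelled by a type 'x of class finite, carrying the
discrete topology and the discrete metric. A map phi is given as a curried function
phi t s x w; only its values for s \<le> t matter.\<close>

definition ddist :: "'x \<Rightarrow> 'x \<Rightarrow> real" where
  "ddist x1 x2 = (if x1 = x2 then 0 else 1)"

definition hdist :: "'x set \<Rightarrow> 'x set \<Rightarrow> real" where
  "hdist A1 A2 = Sup ((\<lambda>a1. Inf ((\<lambda>a2. ddist a1 a2) ` A2)) ` A1)"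

definition phi_set :: "(real \<Rightarrow> real \<Rightarrow> 'x \<Rightarrow> 'w \<Rightarrow> 'x) \<Rightarrow> real \<Rightarrow> real \<Rightarrow> 'x set \<Rightarrow> 'w \<Rightarrow> 'x set" where
  "phi_set \<phi> t t0 B \<omega> = (\<lambda>x. \<phi> t t0 x \<omega>) ` B"

definition NRDS :: "'w measure \<Rightarrow> (real \<Rightarrow> real \<Rightarrow> 'x::finite \<Rightarrow> 'w \<Rightarrow> 'x) \<Rightarrow> bool" where
  "NRDS M \<phi> \<longleftrightarrow>
     (\<lambda>(p, x, \<omega>). \<phi> (fst p) (snd p) x \<omega>)
        \<in> measurable (restrict_space (borel :: (real \<times> real) measure) {p. snd p \<le> fst p}
                        \<Otimes>\<^sub>M count_space UNIV \<Otimes>\<^sub>M M) (count_space UNIV)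
   \<and> (\<forall>t. \<forall>\<omega>\<in>space M. \<forall>x. \<phi> t t x \<omega> = x)
   \<and> (\<forall>t s t0 x. \<forall>\<omega>\<in>space M. t0 \<le> s \<longrightarrow> s \<le> t \<longrightarrow>
         \<phi> t t0 x \<omega> = \<phi> t s (\<phi> s t0 x \<omega>) \<omega>)
   \<and> (\<forall>t s. \<forall>\<omega>\<in>space M. s \<le> t \<longrightarrow>
         continuous_map (discrete_topology UNIV) (discrete_topology UNIV) (\<lambda>x. \<phi> t s x \<omega>))"

text \<open>A nonautonomous random set given by its omega-sections C t w; the set C(t)
is {(x,w). w \<in> space M \<and> x \<in> C t w} and must be measurable in X \<times> Omega;
compactness of the sections is w.r.t. the discrete topology.\<close>
definition compact_nonaut_random_set :: "'w measure \<Rightarrow> (real \<Rightarrow> 'w \<Rightarrow> 'x::finite set) \<Rightarrow> bool" where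
  "compact_nonaut_random_set M C \<longleftrightarrow>
     (\<forall>t. {(x, \<omega>). \<omega> \<in> space M \<and> x \<in> C t \<omega>} \<in> sets (count_space UNIV \<Otimes>\<^sub>M M))
   \<and> (\<forall>t. \<forall>\<omega>\<in>space M. compactin (discrete_topology UNIV) (C t \<omega>))"

definition strictly_invariant :: "'w measure \<Rightarrow> (real \<Rightarrow> real \<Rightarrow> 'x \<Rightarrow> 'w \<Rightarrow> 'x) \<Rightarrow> (real \<Rightarrow> 'w \<Rightarrow> 'x set) \<Rightarrow> bool" where
  "strictly_invariant M \<phi> A \<longleftrightarrow>
     (AE \<omega> in M. \<forall>t t0. t0 \<le> t \<longrightarrow> phi_set \<phi> t t0 (A t0 \<omega>) \<omega> = A t \<omega>)"

definition global_random_pullback_attractor ::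
  "'w measure \<Rightarrow> (real \<Rightarrow> real \<Rightarrow> 'x::finite \<Rightarrow> 'w \<Rightarrow> 'x) \<Rightarrow> (real \<Rightarrow> 'w \<Rightarrow> 'x set) \<Rightarrow> bool" where
  "global_random_pullback_attractor M \<phi> A \<longleftrightarrow>
     compact_nonaut_random_set M A \<and> strictly_invariant M \<phi> A
   \<and> (\<forall>t. AE \<omega> in M. ((\<lambda>t0. hdist (phi_set \<phi> t t0 UNIV \<omega>) (A t \<omega>)) \<longlongrightarrow> 0) at_bot)"

definition global_random_forward_attractor ::
  "'w measure \<Rightarrow> (real \<Rightarrow> real \<Rightarrow> 'x::finite \<Rightarrow> 'w \<Rightarrow> 'x) \<Rightarrow> (real \<Rightarrow> 'w \<Rightarrow> 'x set) \<Rightarrow> bool" where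
  "global_random_forward_attractor M \<phi> A \<longleftrightarrow>
     compact_nonaut_random_set M A \<and> strictly_invariant M \<phi> A
   \<and> (\<forall>t0. AE \<omega> in M. ((\<lambda>t. hdist (phi_set \<phi> t t0 UNIV \<omega>) (A t \<omega>)) \<longlongrightarrow> 0) at_top)"

end

theory Submission
  imports Defs
begin

context
  fixes M :: "'w measure"
    and \<phi> :: "real \<Rightarrow> real \<Rightarrow> 'x::finite \<Rightarrow> 'w \<Rightarrow> 'x"
    and A :: "real \<Rightarrow> 'w \<Rightarrow> 'x set"
  assumes nrds: "NRDS M \<phi>"
    and Adef: "\<And>t \<omega>. A t \<omega> = (\<Inter>t0\<in>{..t}. phi_set \<phi> t t0 UNIV \<omega>)"
begin

lemma coc: "\<omega> \<in> space M \<Longrightarrow> t0 \<le> s \<Longrightarrow> s \<le> t \<Longrightarrow> \<phi> t t0 x \<omega> = \<phi> t s (\<phi> s t0 x \<omega>) \<omega>"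
  using nrds unfolding NRDS_def by blast

lemma coc_set: "\<omega> \<in> space M \<Longrightarrow> t0 \<le> s \<Longrightarrow> s \<le> t \<Longrightarrow>
   phi_set \<phi> t s (phi_set \<phi> s t0 B \<omega>) \<omega> = phi_set \<phi> t t0 B \<omega>"
proof -
  assume a: "\<omega> \<in> space M" "t0 \<le> s" "s \<le> t"
  have "\<And>x. \<phi> t s (\<phi> s t0 x \<omega>) \<omega> = \<phi> t t0 x \<omega>" using coc[OF a] by metis
  then show ?thesis unfolding phi_set_def image_image by simp
qed

lemma mono_set: "\<omega> \<in> space M \<Longrightarrow> s' \<le> s \<Longrightarrow> s \<le> t \<Longrightarrow>
   phi_set \<phi> t s' UNIV \<omega> \<subseteq> phi_set \<phi> t s UNIV \<omega>"
  using coc_set[of \<omega> s' s t UNIV] unfolding phi_set_def by auto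

lemma A_sub: "s \<le> t \<Longrightarrow> A t \<omega> \<subseteq> phi_set \<phi> t s UNIV \<omega>"
  using Adef by auto

lemma stab: assumes "\<omega> \<in> space M"
  shows "\<exists>s \<le> t. \<forall>t0 \<le> s. phi_set \<phi> t t0 UNIV \<omega> = A t \<omega>"
proof -
  obtain s where s: "s \<le> t" and mn: "\<And>y. y \<le> t \<Longrightarrow> card (phi_set \<phi> t s UNIV \<omega>) \<le> card (phi_set \<phi> t y UNIV \<omega>)"
    using ex_has_least_nat[of "\<lambda>s. s \<le> t" t "\<lambda>s. card (phi_set \<phi> t s UNIV \<omega>)"] by auto
  have eq: "phi_set \<phi> t t0 UNIV \<omega> = phi_set \<phi> t s UNIV \<omega>" if "t0 \<le> s" for t0
  proof -
    have sub: "phi_set \<phi> t t0 UNIV \<omega> \<subseteq> phi_set \<phi> t s UNIV \<omega>" using mono_set[OF assms that s] .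
    have "card (phi_set \<phi> t s UNIV \<omega>) \<le> card (phi_set \<phi> t t0 UNIV \<omega>)" using mn[of t0] that s by simp
    moreover have "card (phi_set \<phi> t t0 UNIV \<omega>) \<le> card (phi_set \<phi> t s UNIV \<omega>)" using sub by (simp add: card_mono)
    ultimately show ?thesis using card_subset_eq[OF _ sub] by simp
  qed
  have "A t \<omega> = phi_set \<phi> t s UNIV \<omega>"
  proof
    show "A t \<omega> \<subseteq> phi_set \<phi> t s UNIV \<omega>" using A_sub[OF s] .
    show "phi_set \<phi> t s UNIV \<omega> \<subseteq> A t \<omega>"
      unfolding Adef
    proof (rule INT_greatest)
      fix t0 assume "t0 \<in> {..t}"
      then show "phi_set \<phi> t s UNIV \<omega> \<subseteq> phi_set \<phi> t t0 UNIV \<omega>"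
      proof (cases "t0 \<le> s")
        case True then show ?thesis using eq[OF True] by blast
      next
        case False then show ?thesis using mono_set[OF assms, of s t0 t] \<open>t0 \<in> {..t}\<close> by simp
      qed
    qed
  qed
  then have "\<forall>t0 \<le> s. phi_set \<phi> t t0 UNIV \<omega> = A t \<omega>" using eq by metis
  then show ?thesis using s by blast
qed

lemma invA: assumes "\<omega> \<in> space M" "t0 \<le> t"
  shows "phi_set \<phi> t t0 (A t0 \<omega>) \<omega> = A t \<omega>"
proof -
  obtain s1 where s1: "s1 \<le> t" "\<And>r. r \<le> s1 \<Longrightarrow> phi_set \<phi> t r UNIV \<omega> = A t \<omega>"
    using stab[OF assms(1), of t] by auto
  obtain s2 where s2: "s2 \<le> t0" "\<And>r. r \<le> s2 \<Longrightarrow> phi_set \<phi> t0 r UNIV \<omega> = A t0 \<omega>"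
    using stab[OF assms(1), of t0] by auto
  define s where "s = min s1 s2"
  have e: "phi_set \<phi> t0 s UNIV \<omega> = A t0 \<omega>" using s2(2)[of s] s_def by simp
  have "phi_set \<phi> t t0 (A t0 \<omega>) \<omega> = phi_set \<phi> t t0 (phi_set \<phi> t0 s UNIV \<omega>) \<omega>"
    using e by simp
  also have "\<dots> = phi_set \<phi> t s UNIV \<omega>"
    using coc_set[OF assms(1), of s t0 t UNIV] s2 assms s_def by simp
  also have "\<dots> = A t \<omega>" using s1 s_def by simp
  finally show ?thesis .
qed

lemma propA: assumes "\<omega> \<in> space M" "t0 \<le> t" "t \<le> t'" "phi_set \<phi> t t0 UNIV \<omega> = A t \<omega>"
  shows "phi_set \<phi> t' t0 UNIV \<omega> = A t' \<omega>"
  using coc_set[OF assms(1) assms(2) assms(3), of UNIV] assms invA[OF assms(1) assms(3)] by simp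

lemma backA: assumes "\<omega> \<in> space M" "t0 \<le> n" "n \<le> t" "phi_set \<phi> t n UNIV \<omega> = A t \<omega>"
  shows "phi_set \<phi> t t0 UNIV \<omega> = A t \<omega>"
  using mono_set[OF assms(1) assms(2) assms(3)] A_sub[of t0 t \<omega>] assms by auto

lemma nonempty: assumes om: "\<omega> \<in> space M" shows "A t \<omega> \<noteq> {}"
proof -
  obtain s where "s \<le> t" "phi_set \<phi> t s UNIV \<omega> = A t \<omega>" using stab[OF om, of t] by auto
  then show ?thesis unfolding phi_set_def by auto
qed

lemma meas_phi: assumes "s \<le> t" shows "(\<lambda>\<omega>. \<phi> t s y \<omega>) \<in> measurable M (count_space UNIV)"
proof -
  have F: "(\<lambda>(p, x, \<omega>). \<phi> (fst p) (snd p) x \<omega>)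
        \<in> measurable (restrict_space (borel :: (real \<times> real) measure) {p. snd p \<le> fst p}
                        \<Otimes>\<^sub>M count_space UNIV \<Otimes>\<^sub>M M) (count_space UNIV)"
    using nrds unfolding NRDS_def by blast
  have g: "(\<lambda>\<omega>. ((t,s), y, \<omega>)) \<in> measurable M (restrict_space (borel :: (real \<times> real) measure) {p. snd p \<le> fst p}
                        \<Otimes>\<^sub>M count_space UNIV \<Otimes>\<^sub>M M)"
    by (intro measurable_Pair measurable_const measurable_ident_sets) (auto simp: space_restrict_space assms)
  from measurable_comp[OF g F] show ?thesis by (simp add: o_def)
qed

lemma pred_phi: assumes "s \<le> t" shows "Measurable.pred M (\<lambda>\<omega>. x \<in> phi_set \<phi> t s UNIV \<omega>)"
proof -
  have "Measurable.pred M (\<lambda>\<omega>. \<phi> t s y \<omega> \<in> {x})" for y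
    by (rule pred_sets2[OF _ meas_phi[OF assms]]) simp
  then have "Measurable.pred M (\<lambda>\<omega>. \<exists>y. \<phi> t s y \<omega> \<in> {x})"
    by (rule pred_intros_countable(2))
  moreover have "(\<lambda>\<omega>. x \<in> phi_set \<phi> t s UNIV \<omega>) = (\<lambda>\<omega>. \<exists>y. \<phi> t s y \<omega> \<in> {x})"
    unfolding phi_set_def by auto
  ultimately show ?thesis by simp
qed

lemma A_nat: assumes om: "\<omega> \<in> space M"
  shows "A t \<omega> = (\<Inter>n::nat. phi_set \<phi> t (t - real n) UNIV \<omega>)"
proof
  show "A t \<omega> \<subseteq> (\<Inter>n::nat. phi_set \<phi> t (t - real n) UNIV \<omega>)" by (intro INT_greatest A_sub) simp
  show "(\<Inter>n::nat. phi_set \<phi> t (t - real n) UNIV \<omega>) \<subseteq> A t \<omega>"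
    unfolding Adef
  proof (rule INT_greatest)
    fix t0 assume t0: "t0 \<in> {..t}"
    define n where "n = nat \<lceil>t - t0\<rceil>"
    have "t - real n \<le> t0" unfolding n_def by linarith
    then have "phi_set \<phi> t (t - real n) UNIV \<omega> \<subseteq> phi_set \<phi> t t0 UNIV \<omega>"
      using mono_set[OF om, of "t - real n" t0 t] t0 by auto
    then show "(\<Inter>n::nat. phi_set \<phi> t (t - real n) UNIV \<omega>) \<subseteq> phi_set \<phi> t t0 UNIV \<omega>" by blast
  qed
qed

lemma pred_A: "Measurable.pred M (\<lambda>\<omega>. x \<in> A t \<omega>)"
proof -
  have "Measurable.pred M (\<lambda>\<omega>. \<forall>n::nat. x \<in> phi_set \<phi> t (t - real n) UNIV \<omega>)"
    by (intro pred_intros_countable(1)) (rule pred_phi, simp)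
  moreover have "{\<omega>\<in>space M. x \<in> A t \<omega>} = {\<omega>\<in>space M. \<forall>n::nat. x \<in> phi_set \<phi> t (t - real n) UNIV \<omega>}"
    using A_nat by auto
  ultimately show ?thesis unfolding pred_def by simp
qed

lemma pred_eqA: assumes "s \<le> t" shows "Measurable.pred M (\<lambda>\<omega>. phi_set \<phi> t s UNIV \<omega> = A t \<omega>)"
proof -
  have "Measurable.pred M (\<lambda>\<omega>. \<forall>x. (x \<in> phi_set \<phi> t s UNIV \<omega>) = (x \<in> A t \<omega>))"
    by (intro pred_intros_countable(1) pred_intros_logic(6) pred_phi pred_A assms)
  then show ?thesis by (simp add: set_eq_iff)
qed

end

lemma hdist_self: "B \<noteq> {} \<Longrightarrow> hdist B (B :: 'x::finite set) = 0"
proof -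
  assume B: "B \<noteq> {}"
  have "Inf ((\<lambda>a2. ddist a1 a2) ` B) = 0" if "a1 \<in> B" for a1
    by (rule cInf_eq_minimum) (use that in \<open>auto simp: ddist_def\<close>)
  then have "(\<lambda>a1. Inf ((\<lambda>a2. ddist a1 a2) ` B)) ` B = {0}" using B by auto
  then show ?thesis unfolding hdist_def by simp
qed

theorem theorem6:
  fixes M :: "'w measure"
    and \<phi> :: "real \<Rightarrow> real \<Rightarrow> 'x::finite \<Rightarrow> 'w \<Rightarrow> 'x"
    and A :: "real \<Rightarrow> 'w \<Rightarrow> 'x set"
  assumes "prob_space M"
    and "NRDS M \<phi>"
    and A_def: "\<And>t \<omega>. A t \<omega> = (\<Inter>t0\<in>{..t}. phi_set \<phi> t t0 UNIV \<omega>)"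
  shows "(\<forall>t. \<forall>\<omega>\<in>space M. A t \<omega> \<noteq> {})
    \<and> global_random_pullback_attractor M \<phi> A
    \<and> (\<forall>\<omega>\<in>space M. \<forall>t. \<exists>T0 < t. \<forall>t0 \<le> T0. phi_set \<phi> t t0 UNIV \<omega> = A t \<omega>)
    \<and> (\<forall>T0 :: real \<Rightarrow> 'w \<Rightarrow> real.
         (\<forall>\<omega>\<in>space M. \<forall>t. T0 t \<omega> < t \<and> (\<forall>t0 \<le> T0 t \<omega>. phi_set \<phi> t t0 UNIV \<omega> = A t \<omega>))
         \<longrightarrow> (\<forall>p. 0 < p \<and> p < 1 \<longrightarrow> (\<exists>Tp > 0. \<forall>t.
                 measure M {\<omega> \<in> space M. t - T0 t \<omega> \<le> Tp} \<ge> p))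
         \<longrightarrow> global_random_forward_attractor M \<phi> A
             \<and> (AE \<omega> in M. \<forall>t0. \<exists>T > t0. \<forall>t \<ge> T. phi_set \<phi> t t0 UNIV \<omega> = A t \<omega>))"
proof -
  interpret prob_space M by fact
  note nr = assms(2) and ad = A_def
  have ne: "\<forall>t. \<forall>\<omega>\<in>space M. A t \<omega> \<noteq> {}"
    using nonempty[OF nr ad] by blast
  have st: "\<forall>\<omega>\<in>space M. \<forall>t. \<exists>T0 < t. \<forall>t0 \<le> T0. phi_set \<phi> t t0 UNIV \<omega> = A t \<omega>"
  proof (intro ballI allI)
    fix \<omega> t assume om: "\<omega> \<in> space M"
    obtain s where "s \<le> t" "\<forall>t0 \<le> s. phi_set \<phi> t t0 UNIV \<omega> = A t \<omega>"
      using stab[OF nr ad om, of t] by auto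
    then show "\<exists>T0 < t. \<forall>t0 \<le> T0. phi_set \<phi> t t0 UNIV \<omega> = A t \<omega>"
      by (intro exI[of _ "s - 1"]) auto
  qed
  have cnr: "compact_nonaut_random_set M A"
    unfolding compact_nonaut_random_set_def
  proof (intro conjI allI ballI)
    fix t
    have eq: "{(x, \<omega>). \<omega> \<in> space M \<and> x \<in> A t \<omega>} = (\<Union>x\<in>UNIV. {x} \<times> {\<omega>\<in>space M. x \<in> A t \<omega>})"
      by auto
    have "{\<omega>\<in>space M. x \<in> A t \<omega>} \<in> sets M" for x
      using pred_A[OF nr ad, where x=x and t=t] unfolding pred_def .
    then show "{(x, \<omega>). \<omega> \<in> space M \<and> x \<in> A t \<omega>} \<in> sets (count_space UNIV \<Otimes>\<^sub>M M)"
      unfolding eq by (intro sets.finite_UN) auto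
  next
    fix t \<omega>
    show "compactin (discrete_topology UNIV) (A t \<omega>)"
      by (simp add: compactin_discrete_topology)
  qed
  have si: "strictly_invariant M \<phi> A"
    unfolding strictly_invariant_def using invA[OF nr ad] by auto
  have pb: "global_random_pullback_attractor M \<phi> A"
    unfolding global_random_pullback_attractor_def
  proof (intro conjI cnr si allI AE_I2)
    fix t \<omega> assume om: "\<omega> \<in> space M"
    obtain s where "s \<le> t" "\<forall>t0 \<le> s. phi_set \<phi> t t0 UNIV \<omega> = A t \<omega>"
      using stab[OF nr ad om, of t] by auto
    moreover have "hdist (A t \<omega>) (A t \<omega>) = 0" using hdist_self ne om by blast
    ultimately have "\<forall>t0\<le>s. hdist (phi_set \<phi> t t0 UNIV \<omega>) (A t \<omega>) = 0" by simp
    then have "eventually (\<lambda>t0. hdist (phi_set \<phi> t t0 UNIV \<omega>) (A t \<omega>) = 0) at_bot"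
      unfolding eventually_at_bot_linorder by blast
    then show "((\<lambda>t0. hdist (phi_set \<phi> t t0 UNIV \<omega>) (A t \<omega>)) \<longlongrightarrow> 0) at_bot"
      by (rule tendsto_eventually)
  qed
  have part4: "global_random_forward_attractor M \<phi> A
             \<and> (AE \<omega> in M. \<forall>t0. \<exists>T > t0. \<forall>t \<ge> T. phi_set \<phi> t t0 UNIV \<omega> = A t \<omega>)"
    if H1: "\<forall>\<omega>\<in>space M. \<forall>t. T0 t \<omega> < t \<and> (\<forall>t0 \<le> T0 t \<omega>. phi_set \<phi> t t0 UNIV \<omega> = A t \<omega>)"
    and H2: "\<forall>p. 0 < p \<and> p < 1 \<longrightarrow> (\<exists>Tp > 0. \<forall>t. measure M {\<omega> \<in> space M. t - T0 t \<omega> \<le> Tp} \<ge> p)"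
    for T0 :: "real \<Rightarrow> 'w \<Rightarrow> real"
  proof -
    have key: "AE \<omega> in M. \<exists>T\<ge>t0. phi_set \<phi> T t0 UNIV \<omega> = A T \<omega>" for t0
    proof -
      define E where "E = {\<omega>\<in>space M. \<exists>k::nat. phi_set \<phi> (t0 + real k) t0 UNIV \<omega> = A (t0 + real k) \<omega>}"
      have "Measurable.pred M (\<lambda>\<omega>. \<exists>k::nat. phi_set \<phi> (t0 + real k) t0 UNIV \<omega> = A (t0 + real k) \<omega>)"
        by (intro pred_intros_countable(2) pred_eqA[OF nr ad]) simp
      then have Es: "E \<in> events" unfolding E_def pred_def .
      have ge: "prob E \<ge> p" if p: "0 < p" "p < 1" for p
      proof -
        obtain Tp where Tp: "Tp > 0" "\<And>t. measure M {\<omega> \<in> space M. t - T0 t \<omega> \<le> Tp} \<ge> p"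
          using H2 p by blast
        define S where "S = {\<omega> \<in> space M. (t0 + Tp) - T0 (t0 + Tp) \<omega> \<le> Tp}"
        have mS: "prob S \<ge> p" using Tp(2)[of "t0 + Tp"] unfolding S_def .
        have SE: "S \<subseteq> E"
        proof
          fix \<omega> assume "\<omega> \<in> S"
          then have om: "\<omega> \<in> space M" and le: "t0 \<le> T0 (t0 + Tp) \<omega>" unfolding S_def by auto
          have e1: "phi_set \<phi> (t0 + Tp) t0 UNIV \<omega> = A (t0 + Tp) \<omega>" using H1 om le by blast
          define k where "k = nat \<lceil>Tp\<rceil>"
          have "t0 + Tp \<le> t0 + real k" unfolding k_def by linarith
          then have "phi_set \<phi> (t0 + real k) t0 UNIV \<omega> = A (t0 + real k) \<omega>"
            using propA[OF nr ad om _ _ e1] Tp(1) by simp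
          then show "\<omega> \<in> E" unfolding E_def using om by blast
        qed
        have "prob S \<le> prob E" by (rule finite_measure_mono[OF SE Es])
        then show ?thesis using mS by simp
      qed
      have "prob E = 1"
      proof (rule ccontr)
        assume "prob E \<noteq> 1"
        then have lt: "prob E < 1" using prob_le_1[of E] by linarith
        have "prob E \<ge> (1 + prob E) / 2"
        proof (rule ge)
          have "0 \<le> prob E" by (rule measure_nonneg)
          then show "0 < (1 + prob E) / 2" by (simp add: add_pos_nonneg)
          show "(1 + prob E) / 2 < 1" using lt by simp
        qed
        then show False using lt by simp
      qed
      then have "AE \<omega> in M. \<omega> \<in> E" by (rule AE_prob_1)
      then show ?thesis
      proof (rule AE_mp, intro AE_I2 impI)
        fix \<omega> assume "\<omega> \<in> E"
        then obtain k :: nat where "phi_set \<phi> (t0 + real k) t0 UNIV \<omega> = A (t0 + real k) \<omega>"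
          unfolding E_def by blast
        then show "\<exists>T\<ge>t0. phi_set \<phi> T t0 UNIV \<omega> = A T \<omega>"
          by (intro exI[of _ "t0 + real k"]) auto
      qed
    qed
    have "AE \<omega> in M. \<forall>n::nat. \<exists>T\<ge>real n. phi_set \<phi> T (real n) UNIV \<omega> = A T \<omega>"
      using key by (simp add: AE_all_countable)
    then have key2: "AE \<omega> in M. \<forall>t0. \<exists>T > t0. \<forall>t \<ge> T. phi_set \<phi> t t0 UNIV \<omega> = A t \<omega>"
    proof (rule AE_mp, intro AE_I2 impI allI)
      fix \<omega> and t0 :: real assume om: "\<omega> \<in> space M"
        and h: "\<forall>n::nat. \<exists>T\<ge>real n. phi_set \<phi> T (real n) UNIV \<omega> = A T \<omega>"
      define n where "n = nat \<lceil>t0\<rceil>"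
      have tn: "t0 \<le> real n" unfolding n_def by linarith
      obtain T where T: "T \<ge> real n" "phi_set \<phi> T (real n) UNIV \<omega> = A T \<omega>" using h by blast
      have e: "phi_set \<phi> T t0 UNIV \<omega> = A T \<omega>"
        using backA[OF nr ad om tn T(1) T(2)] .
      show "\<exists>T > t0. \<forall>t \<ge> T. phi_set \<phi> t t0 UNIV \<omega> = A t \<omega>"
      proof (intro exI[of _ "max T (t0 + 1)"] conjI allI impI)
        show "t0 < max T (t0 + 1)" by simp
        fix t assume "max T (t0 + 1) \<le> t"
        then show "phi_set \<phi> t t0 UNIV \<omega> = A t \<omega>"
          using propA[OF nr ad om _ _ e] tn T(1) by simp
      qed
    qed
    have "global_random_forward_attractor M \<phi> A"
      unfolding global_random_forward_attractor_def
    proof (intro conjI cnr si allI)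
      fix t0
      show "AE \<omega> in M. ((\<lambda>t. hdist (phi_set \<phi> t t0 UNIV \<omega>) (A t \<omega>)) \<longlongrightarrow> 0) at_top"
        using key2
      proof (rule AE_mp, intro AE_I2 impI)
        fix \<omega> assume om: "\<omega> \<in> space M"
          and h: "\<forall>t0. \<exists>T > t0. \<forall>t \<ge> T. phi_set \<phi> t t0 UNIV \<omega> = A t \<omega>"
        obtain T where "\<forall>t \<ge> T. phi_set \<phi> t t0 UNIV \<omega> = A t \<omega>" using h by blast
        moreover have "\<And>t. hdist (A t \<omega>) (A t \<omega>) = 0" using hdist_self ne om by blast
        ultimately have "\<forall>t\<ge>T. hdist (phi_set \<phi> t t0 UNIV \<omega>) (A t \<omega>) = 0" by simp
        then have "eventually (\<lambda>t. hdist (phi_set \<phi> t t0 UNIV \<omega>) (A t \<omega>) = 0) at_top"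
          unfolding eventually_at_top_linorder by blast
        then show "((\<lambda>t. hdist (phi_set \<phi> t t0 UNIV \<omega>) (A t \<omega>)) \<longlongrightarrow> 0) at_top"
          by (rule tendsto_eventually)
      qed
    qed
    then show ?thesis using key2 by simp
  qed
  show ?thesis using ne pb st part4 by blast
qed

end
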